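(* Let $C$ be a family of completely positive (symmetric, real) tensors of orders $m\ge 2$ and dimensions $n\ge 2$ satisfying: (1) for all $m,n\ge 2$ there is at least one $m$th order $n$-dimensional tensor in $C$; (2) every matrix (order $m=2$) in $C$ is positive definite; (3) whenever $\mathcal{A}=(a_{i_1\dots i_m})\in C$ has order $m\ge 3$ and dimension $n$, the $(m-1)$th order $n$-dimensional sub-tensor $\mathcal{A}_1=(a_{1 i_2\dots i_m})$ obtained by fixing the first index $i_1=1$ also belongs to $C$. Then every tensor in $C$ is strongly completely positive, and every even order tensor in $C$ is positive definite.
   Context: For $\mathbf{u}\in\mathbb{R}^n$, $\mathbf{u}^m$ is the tensor with entries $u_{i_1}\cdots u_{i_m}$. A symmetric tensor $\mathcal{A}$ of order $m$ and dimension $n$ is completely positive if $\mathcal{A}=(\mathbf{u}^{(1)})^m+\dots+(\mathbf{u}^{(r)})^m$ for some nonnegative $\mathbf{u}^{(1)},\dots,\mathbf{u}^{(r)}\in\mathbb{R}^n$, and strongly completely positive if such a decomposition exists with $\{\mathbf{u}^{(1)},\dots,\mathbf{u}^{(r)}\}$ spanning $\mathbb{R}^n$. For even $m$, $\mathcal{A}$ is positive definite if $\sum_{i_1,\dots,i_m}a_{i_1\dots i_m}x_{i_1}\cdots x_{i_m}>0$ for all nonzero $\mathbf{x}\in\mathbb{R}^n$. *)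

theory Defs
  imports Complex_Main "HOL-Combinatorics.Permutations"
begin

text \<open>Tensors of order m and dimension n are represented as functions
  nat list \<Rightarrow> real, where only index lists of length m with entries < n
  (0-based indices) are meaningful. Real vectors in R^n are functions
  nat \<Rightarrow> real, only coordinates < n being meaningful.\<close>

definition tidx :: "nat \<Rightarrow> nat \<Rightarrow> nat list set" where
  "tidx m n = {is. length is = m \<and> set is \<subseteq> {..<n}}"

definition sym_tensor :: "nat \<Rightarrow> nat \<Rightarrow> (nat list \<Rightarrow> real) \<Rightarrow> bool" where
  "sym_tensor m n A \<longleftrightarrow>
     (\<forall>is\<in>tidx m n. \<forall>js\<in>tidx m n. (\<exists>p. p permutes {..<m} \<and> js = map (\<lambda>k. is ! p k) [0..<m]) \<longrightarrow> A is = A js)"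

definition tpow :: "(nat \<Rightarrow> real) \<Rightarrow> nat list \<Rightarrow> real" where
  "tpow u is = prod_list (map u is)"

definition nonneg_vec :: "nat \<Rightarrow> (nat \<Rightarrow> real) \<Rightarrow> bool" where
  "nonneg_vec n u \<longleftrightarrow> (\<forall>i<n. 0 \<le> u i)"

definition is_decomp :: "nat \<Rightarrow> nat \<Rightarrow> (nat list \<Rightarrow> real) \<Rightarrow> (nat \<Rightarrow> real) list \<Rightarrow> bool" where
  "is_decomp m n A us \<longleftrightarrow>
     (\<forall>u\<in>set us. nonneg_vec n u) \<and>
     (\<forall>is\<in>tidx m n. A is = (\<Sum>u\<leftarrow>us. tpow u is))"

definition spans_Rn :: "nat \<Rightarrow> (nat \<Rightarrow> real) list \<Rightarrow> bool" where
  "spans_Rn n us \<longleftrightarrow>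
     (\<forall>x :: nat \<Rightarrow> real. \<exists>c :: nat \<Rightarrow> real.
        \<forall>i<n. x i = (\<Sum>k<length us. c k * (us ! k) i))"

definition completely_positive :: "nat \<Rightarrow> nat \<Rightarrow> (nat list \<Rightarrow> real) \<Rightarrow> bool" where
  "completely_positive m n A \<longleftrightarrow> sym_tensor m n A \<and> (\<exists>us. is_decomp m n A us)"

definition strongly_completely_positive :: "nat \<Rightarrow> nat \<Rightarrow> (nat list \<Rightarrow> real) \<Rightarrow> bool" where
  "strongly_completely_positive m n A \<longleftrightarrow>
     sym_tensor m n A \<and> (\<exists>us. is_decomp m n A us \<and> spans_Rn n us)"

definition pos_def_tensor :: "nat \<Rightarrow> nat \<Rightarrow> (nat list \<Rightarrow> real) \<Rightarrow> bool" where
  "pos_def_tensor m n A \<longleftrightarrow>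
     (\<forall>x :: nat \<Rightarrow> real. (\<exists>i<n. x i \<noteq> 0) \<longrightarrow>
        0 < (\<Sum>is\<in>tidx m n. A is * prod_list (map x is)))"

end

theory Submission
  imports Defs "Jordan_Normal_Form.Determinant"
begin

lemma quad_form:
  fixes v :: "nat \<Rightarrow> nat \<Rightarrow> real" and w :: "nat \<Rightarrow> real" and y :: "nat \<Rightarrow> real"
  shows "(\<Sum>i<n. y i * (\<Sum>j<n. (\<Sum>k<r. w k * v k i * v k j) * y j))
       = (\<Sum>k<r. w k * (\<Sum>i<n. v k i * y i)^2)"
proof -
  have "(\<Sum>i<n. y i * (\<Sum>j<n. (\<Sum>k<r. w k * v k i * v k j) * y j))
      = (\<Sum>i<n. \<Sum>j<n. \<Sum>k<r. w k * (v k i * y i) * (v k j * y j))"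
    by (simp add: sum_distrib_left sum_distrib_right mult_ac)
  also have "\<dots> = (\<Sum>k<r. \<Sum>i<n. \<Sum>j<n. w k * (v k i * y i) * (v k j * y j))"
    by (simp add: sum.swap[where A="{..<r}"])
  also have "\<dots> = (\<Sum>k<r. w k * (\<Sum>i<n. v k i * y i)^2)"
    by (simp add: power2_eq_square sum_product sum_distrib_left mult_ac)
  finally show ?thesis .
qed

lemma solve:
  fixes v :: "nat \<Rightarrow> nat \<Rightarrow> real" and w :: "nat \<Rightarrow> real" and x :: "nat \<Rightarrow> real"
  assumes pos: "\<forall>x. (\<exists>i<n. x i \<noteq> 0) \<longrightarrow> 0 < (\<Sum>k<r. w k * (\<Sum>i<n. v k i * x i)^2)"
  shows "\<exists>c. \<forall>i<n. x i = (\<Sum>k<r. c k * v k i)"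
proof -
  define G where "G = mat n n (\<lambda>(i,j). \<Sum>k<r. w k * v k i * v k j)"
  have Gc: "G \<in> carrier_mat n n" unfolding G_def by simp
  have Gv: "(G *\<^sub>v y) $ i = (\<Sum>j<n. (\<Sum>k<r. w k * v k i * v k j) * y $ j)"
    if "i < n" "y \<in> carrier_vec n" for i y
    using that unfolding G_def
    by (simp add: scalar_prod_def lessThan_atLeast0 row_def)
  have "det G \<noteq> 0"
  proof
    assume "det G = 0"
    then obtain y where y: "y \<in> carrier_vec n" "y \<noteq> 0\<^sub>v n" "G *\<^sub>v y = 0\<^sub>v n"
      using det_0_iff_vec_prod_zero[OF Gc] by auto
    have "\<exists>i<n. y $ i \<noteq> 0"
    proof (rule ccontr)
      assume "\<not> ?thesis"
      then have "y = 0\<^sub>v n" using y(1) by (intro eq_vecI) auto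
      with y(2) show False by simp
    qed
    then have "0 < (\<Sum>k<r. w k * (\<Sum>i<n. v k i * y $ i)^2)"
      using pos[rule_format, of "\<lambda>i. y $ i"] by simp
    also have "\<dots> = (\<Sum>i<n. y $ i * (\<Sum>j<n. (\<Sum>k<r. w k * v k i * v k j) * y $ j))"
      using quad_form[where y="\<lambda>i. y $ i" and n=n and w=w and v=v and r=r] by simp
    also have "\<dots> = (\<Sum>i<n. y $ i * (G *\<^sub>v y) $ i)"
      using Gv[OF _ y(1)] by simp
    also have "\<dots> = 0" using y(3) by simp
    finally show False by simp
  qed
  then have "G \<in> Units (ring_mat TYPE(real) n ())"
    by (rule det_non_zero_imp_unit[OF Gc])
  then obtain B where B: "B \<in> carrier_mat n n" "G * B = 1\<^sub>m n"
    unfolding Units_def ring_mat_def by auto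
  define X where "X = vec n x"
  define y where "y = B *\<^sub>v X"
  have yc: "y \<in> carrier_vec n" unfolding y_def X_def using B by simp
  have Gy: "G *\<^sub>v y = X"
    unfolding y_def using B Gc X_def
    by (metis assoc_mult_mat_vec one_mult_mat_vec vec_carrier)
  show ?thesis
  proof (intro exI allI impI)
    fix i assume i: "i < n"
    have "x i = (G *\<^sub>v y) $ i" using Gy i X_def by simp
    also have "\<dots> = (\<Sum>j<n. (\<Sum>k<r. w k * v k i * v k j) * y $ j)" using Gv[OF i yc] .
    also have "\<dots> = (\<Sum>k<r. (w k * (\<Sum>j<n. v k j * y $ j)) * v k i)"
      by (simp add: sum_distrib_left sum_distrib_right sum.swap[where A="{..<n}"] mult_ac)
    finally show "x i = (\<Sum>k<r. (w k * (\<Sum>j<n. v k j * y $ j)) * v k i)" .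
  qed
qed


lemma tidx_0: "tidx 0 n = {[]}"
  unfolding tidx_def by auto

lemma tidx_Suc: "tidx (Suc m) n = (\<lambda>(i,is). i # is) ` ({..<n} \<times> tidx m n)"
  unfolding tidx_def by (auto simp: length_Suc_conv image_iff)

lemma finite_tidx: "finite (tidx m n)"
  unfolding tidx_def using finite_lists_length_eq[of "{..<n}" m] by (simp add: conj_commute)

lemma tsum:
  fixes u x :: "nat \<Rightarrow> real"
  shows "(\<Sum>is\<in>tidx m n. tpow u is * prod_list (map x is)) = (\<Sum>i<n. u i * x i) ^ m"
proof (induction m)
  case 0
  then show ?case by (simp add: tidx_0 tpow_def)
next
  case (Suc m)
  have inj: "inj_on (\<lambda>(i,is). i # is) ({..<n} \<times> tidx m n)"
    by (auto simp: inj_on_def)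
  have "(\<Sum>is\<in>tidx (Suc m) n. tpow u is * prod_list (map x is))
      = (\<Sum>p\<in>{..<n} \<times> tidx m n. tpow u (fst p # snd p) * prod_list (map x (fst p # snd p)))"
    unfolding tidx_Suc by (subst sum.reindex[OF inj]) (simp add: case_prod_beta)
  also have "\<dots> = (\<Sum>i<n. \<Sum>is\<in>tidx m n. (u i * x i) * (tpow u is * prod_list (map x is)))"
    by (simp add: sum.cartesian_product case_prod_beta tpow_def mult_ac)
  also have "\<dots> = (\<Sum>i<n. u i * x i) * (\<Sum>i<n. u i * x i) ^ m"
    by (simp add: sum_distrib_left[symmetric] Suc sum_distrib_right)
  finally show ?case by simp
qed

lemma chain:
  assumes sub: "\<And>m n A. (m, n, A) \<in> C \<Longrightarrow> 3 \<le> m \<Longrightarrow>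
                \<exists>B. (m - 1, n, B) \<in> C \<and> (\<forall>is\<in>tidx (m - 1) n. B is = A (0 # is))"
    and n: "0 < n"
  shows "(m, n, A) \<in> C \<Longrightarrow> 2 \<le> m \<Longrightarrow>
    \<exists>M. (2, n, M) \<in> C \<and> (\<forall>is\<in>tidx 2 n. M is = A (replicate (m - 2) 0 @ is))"
proof (induction m arbitrary: A)
  case 0
  then show ?case by simp
next
  case (Suc m)
  show ?case
  proof (cases "Suc m = 2")
    case True
    have "(2, n, A) \<in> C" using Suc.prems(1) unfolding True .
    then show ?thesis using True by (intro exI[of _ A]) auto
  next
    case False
    then have m2: "2 \<le> m" "3 \<le> Suc m" using Suc.prems by auto
    obtain B where B: "(m, n, B) \<in> C" "\<forall>is\<in>tidx m n. B is = A (0 # is)"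
      using sub[OF Suc.prems(1) m2(2)] by auto
    obtain M where M: "(2, n, M) \<in> C" "\<forall>is\<in>tidx 2 n. M is = B (replicate (m - 2) 0 @ is)"
      using Suc.IH[OF B(1) m2(1)] by auto
    have "M is = A (replicate (Suc m - 2) 0 @ is)" if "is \<in> tidx 2 n" for "is"
    proof -
      have "replicate (m - 2) 0 @ is \<in> tidx m n"
        using that n m2 unfolding tidx_def by auto
      then have "M is = A (0 # replicate (m - 2) 0 @ is)" using M B that by auto
      moreover have "0 # replicate (m - 2) 0 = replicate (Suc m - 2) (0::nat)"
        proof -
        have "Suc m - 2 = Suc (m - 2)" using m2 by simp
        then show ?thesis by simp
      qed
      ultimately show ?thesis by (metis append_Cons)
    qed
    then show ?thesis using M by blast
  qed
qed

theorem theorem4p1: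
  fixes C :: "(nat \<times> nat \<times> (nat list \<Rightarrow> real)) set"
  assumes cp: "\<And>m n A. (m, n, A) \<in> C \<Longrightarrow> 2 \<le> m \<and> 2 \<le> n \<and> completely_positive m n A"
    and nonempty: "\<And>m n. 2 \<le> m \<Longrightarrow> 2 \<le> n \<Longrightarrow> \<exists>A. (m, n, A) \<in> C"
    and matrix_pd: "\<And>n A. (2, n, A) \<in> C \<Longrightarrow> pos_def_tensor 2 n A"
    and sub: "\<And>m n A. (m, n, A) \<in> C \<Longrightarrow> 3 \<le> m \<Longrightarrow>
                \<exists>B. (m - 1, n, B) \<in> C \<and> (\<forall>is\<in>tidx (m - 1) n. B is = A (0 # is))"
  shows "\<forall>(m, n, A) \<in> C. strongly_completely_positive m n A \<and>
                          (even m \<longrightarrow> pos_def_tensor m n A)"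
proof (clarify)
  fix m n A assume mnA: "(m, n, A) \<in> C"
  have m2: "2 \<le> m" and n2: "2 \<le> n" and cpA: "completely_positive m n A" using cp[OF mnA] by auto
  obtain us where sym: "sym_tensor m n A" and dec: "is_decomp m n A us"
    using cpA unfolding completely_positive_def by auto
  define r where "r = length us"
  define V where "V k = us ! k" for k
  define w where "w k = V k 0 ^ (m - 2)" for k
  have Aeq: "A is = (\<Sum>k<r. tpow (V k) is)" if "is \<in> tidx m n" for "is"
    using dec that unfolding is_decomp_def r_def V_def
    by (simp add: sum_list_sum_nth lessThan_atLeast0)
  have nonneg: "\<forall>i<n. 0 \<le> V k i" if "k < r" for k
    using dec that unfolding is_decomp_def r_def V_def nonneg_vec_def by auto
  obtain M where M: "(2, n, M) \<in> C" "\<forall>is\<in>tidx 2 n. M is = A (replicate (m - 2) 0 @ is)"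
    using chain[OF sub _ mnA m2] n2 by auto
  have Meq: "M is = (\<Sum>k<r. w k * tpow (V k) is)" if "is \<in> tidx 2 n" for "is"
  proof -
    have "replicate (m - 2) 0 @ is \<in> tidx m n"
      using that n2 m2 unfolding tidx_def by auto
    then show ?thesis using M that Aeq
      by (simp add: tpow_def w_def)
  qed
  have P: "\<forall>x. (\<exists>i<n. x i \<noteq> 0) \<longrightarrow> 0 < (\<Sum>k<r. w k * (\<Sum>i<n. V k i * x i)^2)"
  proof (intro allI impI)
    fix x :: "nat \<Rightarrow> real" assume x: "\<exists>i<n. x i \<noteq> 0"
    have "0 < (\<Sum>is\<in>tidx 2 n. M is * prod_list (map x is))"
      using matrix_pd[OF M(1)] x unfolding pos_def_tensor_def by blast
    also have "\<dots> = (\<Sum>is\<in>tidx 2 n. \<Sum>k<r. w k * (tpow (V k) is * prod_list (map x is)))"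
      by (intro sum.cong refl) (simp add: Meq sum_distrib_right sum_distrib_left mult_ac)
    also have "\<dots> = (\<Sum>k<r. w k * (\<Sum>is\<in>tidx 2 n. tpow (V k) is * prod_list (map x is)))"
      by (subst sum.swap) (simp add: sum_distrib_left)
    also have "\<dots> = (\<Sum>k<r. w k * (\<Sum>i<n. V k i * x i)^2)"
      by (simp add: tsum)
    finally show "0 < (\<Sum>k<r. w k * (\<Sum>i<n. V k i * x i)^2)" .
  qed
  have span: "spans_Rn n us"
    unfolding spans_Rn_def
  proof
    fix x :: "nat \<Rightarrow> real"
    show "\<exists>c. \<forall>i<n. x i = (\<Sum>k<length us. c k * (us ! k) i)"
      using solve[OF P, of x] unfolding r_def V_def by simp
  qed
  show "strongly_completely_positive m n A \<and> (even m \<longrightarrow> pos_def_tensor m n A)"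
  proof
    show "strongly_completely_positive m n A"
      unfolding strongly_completely_positive_def using sym dec span by blast
  next
    show "even m \<longrightarrow> pos_def_tensor m n A"
    proof (intro impI)
      assume ev: "even m"
      show "pos_def_tensor m n A"
        unfolding pos_def_tensor_def
      proof (intro allI impI)
        fix x :: "nat \<Rightarrow> real" assume x: "\<exists>i<n. x i \<noteq> 0"
        have "(\<Sum>is\<in>tidx m n. A is * prod_list (map x is))
            = (\<Sum>is\<in>tidx m n. \<Sum>k<r. tpow (V k) is * prod_list (map x is))"
          by (intro sum.cong refl) (simp add: Aeq sum_distrib_right)
        also have "\<dots> = (\<Sum>k<r. (\<Sum>i<n. V k i * x i) ^ m)"
          by (subst sum.swap) (simp add: tsum)
        finally have eq: "(\<Sum>is\<in>tidx m n. A is * prod_list (map x is)) = (\<Sum>k<r. (\<Sum>i<n. V k i * x i) ^ m)" .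
        have "\<exists>k<r. w k * (\<Sum>i<n. V k i * x i)^2 \<noteq> 0"
        proof (rule ccontr)
          assume "\<not> ?thesis"
          then have "(\<Sum>k<r. w k * (\<Sum>i<n. V k i * x i)^2) = 0" by (auto intro!: sum.neutral)
          with P x show False by auto
        qed
        then obtain k where k: "k < r" "(\<Sum>i<n. V k i * x i) \<noteq> 0" by auto
        have "0 < (\<Sum>k<r. (\<Sum>i<n. V k i * x i) ^ m)"
          by (rule sum_pos2[of "{..<r}" k]) (use k ev in \<open>auto simp: zero_le_even_power zero_less_power_eq\<close>)
        then show "0 < (\<Sum>is\<in>tidx m n. A is * prod_list (map x is))" using eq by simp
      qed
    qed
  qed
qed

end
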